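(* For every integer $\ell\geq 3$, the cycle $C_{2\ell+1}$ is not probe $P_5$-free, but it is probe $P_6$-free.
   Context: All graphs are finite and simple. $C_n$ is the cycle on $n$ vertices and $P_t$ the path on $t$ vertices. A graph is $H$-free if it contains no induced subgraph isomorphic to $H$. A graph $G=(V,E)$ is probe $H$-free if there is an independent set $N$ of $G$ and a set $F\subseteq\binom{N}{2}$ such that the graph $(V,E\cup F)$ is $H$-free. *)

theory Defs
  imports Main
begin

type_synonym 'a graph = "'a set \<times> 'a set set"

definition simple_graph :: "'a graph \<Rightarrow> bool" where
  "simple_graph G \<longleftrightarrow> finite (fst G) \<and>
     (\<forall>e\<in>snd G. \<exists>u v. u \<noteq> v \<and> e = {u, v} \<and> u \<in> fst G \<and> v \<in> fst G)"

definition induced_subgraph_of :: "'b graph \<Rightarrow> 'a graph \<Rightarrow> bool" where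
  "induced_subgraph_of H G \<longleftrightarrow>
     (\<exists>f. inj_on f (fst H) \<and> f ` fst H \<subseteq> fst G \<and>
          (\<forall>u\<in>fst H. \<forall>v\<in>fst H. ({u, v} \<in> snd H \<longleftrightarrow> {f u, f v} \<in> snd G)))"

definition H_free :: "'b graph \<Rightarrow> 'a graph \<Rightarrow> bool" where
  "H_free H G \<longleftrightarrow> \<not> induced_subgraph_of H G"

definition independent_set :: "'a graph \<Rightarrow> 'a set \<Rightarrow> bool" where
  "independent_set G N \<longleftrightarrow> N \<subseteq> fst G \<and> (\<forall>u\<in>N. \<forall>v\<in>N. {u, v} \<notin> snd G)"

definition probe_H_free :: "'b graph \<Rightarrow> 'a graph \<Rightarrow> bool" where
  "probe_H_free H G \<longleftrightarrow>
     (\<exists>N F. independent_set G N \<and>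
            F \<subseteq> {e. \<exists>u v. u \<in> N \<and> v \<in> N \<and> u \<noteq> v \<and> e = {u, v}} \<and>
            H_free H (fst G, snd G \<union> F))"

definition cycle_graph :: "nat \<Rightarrow> nat graph" where
  "cycle_graph n = ({0..<n}, {{i, (i + 1) mod n} | i. i < n})"

definition path_graph :: "nat \<Rightarrow> nat graph" where
  "path_graph t = ({0..<t}, {{i, i + 1} | i. i + 1 < t})"

end

theory Submission
  imports Defs
begin
lemma mod_inj: assumes "i < (n::nat)" "j < n" "(a + i) mod n = (a + j) mod n" shows "i = j"
proof -
  have "\<And>i j. i < n \<Longrightarrow> j < n \<Longrightarrow> i \<le> j \<Longrightarrow> (a + i) mod n = (a + j) mod n \<Longrightarrow> i = j"
  proof -
    fix i j assume h: "i < n" "j < n" "i \<le> j" "(a + i) mod n = (a + j) mod n"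
    then have "n dvd (a + j) - (a + i)" using mod_eq_dvd_iff_nat[of "a+i" "a+j" n] by simp
    then have "n dvd j - i" by simp
    moreover have "j - i < n" using h by simp
    ultimately have "j - i = 0" by (metis nat_dvd_not_less neq0_conv)
    then show "i = j" using h by simp
  qed
  then show ?thesis using assms by (metis nat_le_linear)
qed

lemma cyc_edge: "{x,y} \<in> snd (cycle_graph n) \<longleftrightarrow> (\<exists>i<n. {x,y} = {i,(i+1) mod n})"
  by (auto simp: cycle_graph_def)

lemma path_edge: "{u,v} \<in> snd (path_graph t) \<longleftrightarrow> ((v = Suc u \<and> Suc u < t) \<or> (u = Suc v \<and> Suc v < t))"
  by (auto simp: path_graph_def doubleton_eq_iff)

lemma path_single: "{u} \<notin> snd (path_graph t)"
  by (auto simp: path_graph_def doubleton_eq_iff)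

lemma cyc_adj:
  assumes "n \<ge> 7" "i \<le> 5" "j \<le> 5"
  shows "{(a+i) mod n, (a+j) mod n} \<in> snd (cycle_graph n) \<longleftrightarrow> (j = i+1 \<or> i = j+1)"
proof
  have S: "\<And>k. ((a+k) mod n + 1) mod n = (a + (k+1)) mod n" by (simp add: mod_Suc_eq)
  assume "{(a+i) mod n, (a+j) mod n} \<in> snd (cycle_graph n)"
  then obtain k where k: "k < n" "{(a+i) mod n, (a+j) mod n} = {k,(k+1) mod n}"
    unfolding cyc_edge by blast
  then have "((a+i) mod n = k \<and> (a+j) mod n = (k+1) mod n) \<or> ((a+j) mod n = k \<and> (a+i) mod n = (k+1) mod n)"
    by (auto simp: doubleton_eq_iff)
  then show "j = i+1 \<or> i = j+1"
  proof
    assume "(a+i) mod n = k \<and> (a+j) mod n = (k+1) mod n"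
    then have "(a+j) mod n = (a+(i+1)) mod n" using S by metis
    then show ?thesis using mod_inj[of j n "i+1" a] assms by simp
  next
    assume "(a+j) mod n = k \<and> (a+i) mod n = (k+1) mod n"
    then have "(a+i) mod n = (a+(j+1)) mod n" using S by metis
    then show ?thesis using mod_inj[of i n "j+1" a] assms by simp
  qed
next
  have S: "\<And>k. ((a+k) mod n + 1) mod n = (a + (k+1)) mod n" by (simp add: mod_Suc_eq)
  have pos: "n > 0" using assms by simp
  assume "j = i+1 \<or> i = j+1"
  then show "{(a+i) mod n, (a+j) mod n} \<in> snd (cycle_graph n)"
  proof
    assume "j = i+1"
    then have "{(a+i) mod n, (a+j) mod n} = {(a+i) mod n, ((a+i) mod n + 1) mod n}" using S by simp
    then show ?thesis unfolding cyc_edge using pos by (metis mod_less_divisor)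
  next
    assume "i = j+1"
    then have "{(a+i) mod n, (a+j) mod n} = {(a+j) mod n, ((a+j) mod n + 1) mod n}" using S by auto
    then show ?thesis unfolding cyc_edge using pos by (metis mod_less_divisor)
  qed
qed

lemma exists_gap:
  assumes n: "n = 2*l+1" "l \<ge> 3" and ind: "independent_set (cycle_graph n) N"
  shows "\<exists>a<n. a \<notin> N \<and> (a+1) mod n \<notin> N"
proof (rule ccontr)
  assume "\<not> ?thesis"
  then have cov: "\<And>a. a < n \<Longrightarrow> a \<in> N \<or> (a+1) mod n \<in> N" by blast
  have ed: "\<And>a. a < n \<Longrightarrow> {a, (a+1) mod n} \<in> snd (cycle_graph n)" unfolding cyc_edge by blast
  have indep: "\<And>a. a < n \<Longrightarrow> a \<in> N \<Longrightarrow> (a+1) mod n \<notin> N"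
    using ind ed unfolding independent_set_def by blast
  have alt: "\<And>a. a < n \<Longrightarrow> ((a+1) mod n \<in> N \<longleftrightarrow> a \<notin> N)" using cov indep by blast
  have K: "\<And>k. k < n \<Longrightarrow> (k \<in> N \<longleftrightarrow> (0 \<in> N \<longleftrightarrow> even k))"
  proof -
    fix k show "k < n \<Longrightarrow> (k \<in> N \<longleftrightarrow> (0 \<in> N \<longleftrightarrow> even k))"
    proof (induction k)
      case 0 then show ?case by simp
    next
      case (Suc k)
      then have kn: "k < n" by simp
      have IH: "k \<in> N \<longleftrightarrow> (0 \<in> N \<longleftrightarrow> even k)" using Suc.IH kn by blast
      have "(k+1) mod n = Suc k" using Suc.prems by simp
      then have "Suc k \<in> N \<longleftrightarrow> k \<notin> N" using alt[OF kn] by simp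
      moreover have "even (Suc k) \<longleftrightarrow> \<not> even k" by simp
      ultimately show ?case using IH by blast
    qed
  qed
  have l1: "2*l < n" "even (2*l)" "(2*l + 1) mod n = 0" using n by auto
  have "2*l \<in> N \<longleftrightarrow> 0 \<in> N" using K[OF l1(1)] l1(2) by blast
  moreover have "0 \<in> N \<longleftrightarrow> 2*l \<notin> N" using alt[OF l1(1)] l1(3) by simp
  ultimately show False by blast
qed

lemma part1:
  assumes n: "n = 2*l+1" "l \<ge> 3" and ind: "independent_set (cycle_graph n) N"
    and FN: "F \<subseteq> {e. \<exists>u v. u \<in> N \<and> v \<in> N \<and> u \<noteq> v \<and> e = {u, v}}"
  shows "induced_subgraph_of (path_graph 5) (fst (cycle_graph n), snd (cycle_graph n) \<union> F)"
proof -
  obtain a where a: "a < n" "a \<notin> N" "(a+1) mod n \<notin> N" using exists_gap[OF n ind] by blast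
  define s where "s k = (a + k) mod n" for k
  have n7: "n \<ge> 7" using n by simp
  have sa: "s 0 \<notin> N" "s 1 \<notin> N" using a by (auto simp: s_def)
  have E: "\<And>i j. i \<le> 5 \<Longrightarrow> j \<le> 5 \<Longrightarrow> {s i, s j} \<in> snd (cycle_graph n) \<longleftrightarrow> (j = i+1 \<or> i = j+1)"
    unfolding s_def using cyc_adj[OF n7] by blast
  have Fp: "\<And>i j. {s i, s j} \<in> F \<Longrightarrow> s i \<in> N \<and> s j \<in> N" using FN by (auto simp: doubleton_eq_iff)
  have Fd: "\<And>i. {s i, s i} \<notin> F" using FN by (auto simp: doubleton_eq_iff)
  have indep: "\<And>i. i \<le> 4 \<Longrightarrow> s i \<in> N \<Longrightarrow> s (i+1) \<notin> N"
  proof -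
    fix i assume "i \<le> 4" "s i \<in> N"
    moreover have "{s i, s (i+1)} \<in> snd (cycle_graph n)" using E \<open>i \<le> 4\<close> by simp
    ultimately show "s (i+1) \<notin> N" using ind unfolding independent_set_def by blast
  qed
  have sinj: "\<And>i j. i \<le> 5 \<Longrightarrow> j \<le> 5 \<Longrightarrow> s i = s j \<Longrightarrow> i = j"
  proof -
    fix i j :: nat assume h: "i \<le> 5" "j \<le> 5" "s i = s j"
    have "i < n" "j < n" using h n7 by auto
    then show "i = j" using mod_inj h(3) unfolding s_def by blast
  qed
  have srange: "\<And>i. s i < n" unfolding s_def using n by simp
  have fst: "fst (cycle_graph n) = {0..<n}" "fst (path_graph 5) = {0..<5}" by (auto simp: cycle_graph_def path_graph_def)
  have nF: "\<And>i j. s i \<notin> N \<Longrightarrow> {s i, s j} \<notin> F \<and> {s j, s i} \<notin> F" using Fp by blast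
  have nF0: "\<And>j. {s 0, s j} \<notin> F" "\<And>j. {s j, s 0} \<notin> F" using nF sa by blast+
  have nF1: "\<And>j. {s 1, s j} \<notin> F" "\<And>j. {s j, s 1} \<notin> F" using nF sa by blast+
  have Es: "\<And>i. i \<le> 5 \<Longrightarrow> {s i} \<notin> snd (cycle_graph n)" using E by fastforce
  show ?thesis
  proof (cases "{s 2, s 4} \<in> F")
    case False
    then have nF24: "{s 2, s 4} \<notin> F" "{s 4, s 2} \<notin> F" by (auto simp: insert_commute)
    have ok: "\<forall>u\<in>{0..<5}. \<forall>v\<in>{0..<5}. ({u,v} \<in> snd (path_graph 5) \<longleftrightarrow> {s u, s v} \<in> snd (cycle_graph n) \<union> F)"
    proof (intro ballI)
      fix u v :: nat assume "u \<in> {0..<5}" "v \<in> {0..<5}"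
      then have uv: "u \<in> {0,1,2,3,4}" "v \<in> {0,1,2,3,4}" by auto
      show "({u,v} \<in> snd (path_graph 5) \<longleftrightarrow> {s u, s v} \<in> snd (cycle_graph n) \<union> F)"
        using uv apply (elim insertE emptyE)
        apply (simp_all add: E path_edge nF0 nF1 nF1[unfolded One_nat_def] Fd[simplified] nF24 Es path_single)
        done
    qed
    have "inj_on s {0..<5}" using sinj by (intro inj_onI) auto
    then show ?thesis unfolding induced_subgraph_of_def fst using ok srange
      by (intro exI[of _ s]) auto
  next
    case True
    then have N24: "s 2 \<in> N" "s 4 \<in> N" using Fp by auto
    then have N35: "s 3 \<notin> N" "s 5 \<notin> N" using indep[of 2] indep[of 4] by auto
    have nF5: "\<And>j. {s 5, s j} \<notin> F" "\<And>j. {s j, s 5} \<notin> F" using nF N35 by blast+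
    define g where "g k = (if k \<le> 2 then k else k + 1)" for k :: nat
    have ok: "\<forall>u\<in>{0..<5}. \<forall>v\<in>{0..<5}. ({u,v} \<in> snd (path_graph 5) \<longleftrightarrow> {s (g u), s (g v)} \<in> snd (cycle_graph n) \<union> F)"
    proof (intro ballI)
      fix u v :: nat assume "u \<in> {0..<5}" "v \<in> {0..<5}"
      then have uv: "u \<in> {0,1,2,3,4}" "v \<in> {0,1,2,3,4}" by auto
      show "({u,v} \<in> snd (path_graph 5) \<longleftrightarrow> {s (g u), s (g v)} \<in> snd (cycle_graph n) \<union> F)"
        using uv apply (elim insertE emptyE)
        apply (simp_all add: g_def True True[unfolded insert_commute[of "s 2"]] E path_edge nF0 nF1 nF1[unfolded One_nat_def] nF5 Fd[simplified] Es path_single)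
        done
    qed
    have "inj_on (s \<circ> g) {0..<5}"
    proof (rule inj_onI)
      fix x y assume "x \<in> {0..<(5::nat)}" "y \<in> {0..<(5::nat)}" "(s \<circ> g) x = (s \<circ> g) y"
      then have "g x = g y" using sinj[of "g x" "g y"] by (auto simp: g_def)
      then show "x = y" by (auto simp: g_def split: if_splits)
    qed
    then show ?thesis unfolding induced_subgraph_of_def fst using ok srange
      by (intro exI[of _ "s \<circ> g"]) auto
  qed
qed

lemma e5: "(\<forall>i<(5::nat). R i) = (R 0 \<and> R 1 \<and> R 2 \<and> R 3 \<and> R 4)"
proof
  assume "\<forall>i<(5::nat). R i" then show "R 0 \<and> R 1 \<and> R 2 \<and> R 3 \<and> R 4" by simp
next
  assume h: "R 0 \<and> R 1 \<and> R 2 \<and> R 3 \<and> R 4"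
  show "\<forall>i<(5::nat). R i"
  proof (intro allI impI)
    fix i :: nat assume "i < 5"
    then have "i = 0 \<or> i = 1 \<or> i = 2 \<or> i = 3 \<or> i = 4" by presburger
    then show "R i" using h by auto
  qed
qed
lemma e6: "(\<forall>i<(6::nat). R i) = (R 0 \<and> R 1 \<and> R 2 \<and> R 3 \<and> R 4 \<and> R 5)"
proof
  assume "\<forall>i<(6::nat). R i" then show "R 0 \<and> R 1 \<and> R 2 \<and> R 3 \<and> R 4 \<and> R 5" by simp
next
  assume h: "R 0 \<and> R 1 \<and> R 2 \<and> R 3 \<and> R 4 \<and> R 5"
  show "\<forall>i<(6::nat). R i"
  proof (intro allI impI)
    fix i :: nat assume "i < 6"
    then have "i = 0 \<or> i = 1 \<or> i = 2 \<or> i = 3 \<or> i = 4 \<or> i = 5" by presburger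
    then show "R i" using h by auto
  qed
qed
lemma comb:
  assumes "\<forall>i<5. P i \<or> P (Suc i) \<or> Q i"
    "\<forall>i<6. \<forall>j<6. P i \<and> P j \<and> i \<noteq> j \<longrightarrow> j = Suc i \<or> i = Suc j"
    "\<forall>i<5. \<forall>j<5. Q i \<and> Q j \<longrightarrow> i = j"
  shows False
proof -
  have a: "P 0 \<or> P 1 \<or> Q 0" "P 1 \<or> P 2 \<or> Q 1" "P 2 \<or> P 3 \<or> Q 2" "P 3 \<or> P 4 \<or> Q 3" "P 4 \<or> P 5 \<or> Q 4"
    using assms(1)[rule_format, of 0] assms(1)[rule_format, of 1] assms(1)[rule_format, of 2]
      assms(1)[rule_format, of 3] assms(1)[rule_format, of 4] by (simp_all add: numeral_eq_Suc)
  have b: "\<And>i j. i < 6 \<Longrightarrow> j < 6 \<Longrightarrow> i + 1 < j \<Longrightarrow> \<not> (P i \<and> P j)" 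
  proof -
    fix i j :: nat assume h: "i < 6" "j < 6" "i + 1 < j"
    have "P i \<and> P j \<and> i \<noteq> j \<longrightarrow> j = Suc i \<or> i = Suc j" using assms(2) h(1,2) by blast
    then show "\<not> (P i \<and> P j)" using h(3) by auto
  qed
  have c: "\<And>i j. i < 5 \<Longrightarrow> j < 5 \<Longrightarrow> i < j \<Longrightarrow> \<not> (Q i \<and> Q j)" 
  proof -
    fix i j :: nat assume h: "i < 5" "j < 5" "i < j"
    have "Q i \<and> Q j \<longrightarrow> i = j" using assms(3) h(1,2) by blast
    then show "\<not> (Q i \<and> Q j)" using h(3) by auto
  qed
  have b'': "\<not> (P 0 \<and> P 2)" "\<not> (P 0 \<and> P 3)" "\<not> (P 0 \<and> P 4)" "\<not> (P 0 \<and> P 5)" "\<not> (P 1 \<and> P 3)"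
     "\<not> (P 1 \<and> P 4)" "\<not> (P 1 \<and> P 5)" "\<not> (P 2 \<and> P 4)" "\<not> (P 2 \<and> P 5)" "\<not> (P 3 \<and> P 5)"
    apply (rule b; simp)+ done
  have c'': "\<not> (Q 0 \<and> Q 1)" "\<not> (Q 0 \<and> Q 2)" "\<not> (Q 0 \<and> Q 3)" "\<not> (Q 0 \<and> Q 4)" "\<not> (Q 1 \<and> Q 2)"
     "\<not> (Q 1 \<and> Q 3)" "\<not> (Q 1 \<and> Q 4)" "\<not> (Q 2 \<and> Q 3)" "\<not> (Q 2 \<and> Q 4)" "\<not> (Q 3 \<and> Q 4)"
    apply (rule c; simp)+ done
  show False using a b'' c''
    by blast
qed


lemma part2:
  assumes n: "n = 2*l+1" "l \<ge> 3"
  shows "probe_H_free (path_graph 6) (cycle_graph n)"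
proof -
  define N where "N = {k. k < 2*l - 1 \<and> even k}"
  define F where "F = {e. \<exists>u v. u \<in> N \<and> v \<in> N \<and> u \<noteq> v \<and> e = {u, v}}"
  define D where "D = {2*l - 1, 2*l}"
  have fst: "fst (cycle_graph n) = {0..<n}" "fst (path_graph 6) = {0..<6}" by (auto simp: cycle_graph_def path_graph_def)
  have cov: "\<And>u v. {u,v} \<in> snd (cycle_graph n) \<union> F \<Longrightarrow> u \<in> N \<or> v \<in> N \<or> {u,v} = D"
  proof -
    fix u v assume "{u,v} \<in> snd (cycle_graph n) \<union> F"
    then show "u \<in> N \<or> v \<in> N \<or> {u,v} = D"
    proof
      assume "{u,v} \<in> F" then show ?thesis unfolding F_def by (auto simp: doubleton_eq_iff)
    next
      assume "{u,v} \<in> snd (cycle_graph n)"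
      then obtain i where i: "i < n" "{u,v} = {i, (i+1) mod n}" unfolding cyc_edge by blast
      consider "i < 2*l - 1" | "i = 2*l - 1" | "i = 2*l" using i n by linarith
      then show ?thesis
      proof cases
        case 1
        then have "(i+1) mod n = i+1" using n by simp
        moreover have "i \<in> N \<or> i + 1 \<in> N"
        proof (cases "even i")
          case True then show ?thesis using 1 unfolding N_def by simp
        next
          case False
          then have "i + 1 \<noteq> 2*l - 1" using n by presburger
          then have "i + 1 < 2*l - 1" using 1 by linarith
          then show ?thesis using False unfolding N_def by simp
        qed
        ultimately show ?thesis using i by (auto simp: doubleton_eq_iff)
      next
        case 2
        then have "(i+1) mod n = 2*l" using n by simp
        then show ?thesis using i 2 unfolding D_def by (auto simp: doubleton_eq_iff)
      next
        case 3
        then have "(i+1) mod n = 0" using n by simp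
        moreover have "0 \<in> N" unfolding N_def using n by simp
        ultimately show ?thesis using i by (auto simp: doubleton_eq_iff)
      qed
    qed
  qed
  have ind: "independent_set (cycle_graph n) N"
    unfolding independent_set_def
  proof (intro conjI ballI)
    show "N \<subseteq> fst (cycle_graph n)" unfolding fst N_def using n by auto
  next
    fix u v assume uv: "u \<in> N" "v \<in> N"
    show "{u,v} \<notin> snd (cycle_graph n)"
    proof
      assume "{u,v} \<in> snd (cycle_graph n)"
      then obtain i where i: "i < n" "{u,v} = {i, (i+1) mod n}" unfolding cyc_edge by blast
      have "i \<in> N" "(i+1) mod n \<in> N" using i uv by (auto simp: doubleton_eq_iff)
      then have "i < 2*l - 1" unfolding N_def by simp
      then have "(i+1) mod n = i+1" using n by simp
      then show False using \<open>i \<in> N\<close> \<open>(i+1) mod n \<in> N\<close> unfolding N_def by simp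
    qed
  qed
  have free: "H_free (path_graph 6) (fst (cycle_graph n), snd (cycle_graph n) \<union> F)"
    unfolding H_free_def
  proof
    assume "induced_subgraph_of (path_graph 6) (fst (cycle_graph n), snd (cycle_graph n) \<union> F)"
    then obtain x where inj: "inj_on x {0..<6}"
      and adj0: "\<forall>u\<in>{0..<6}. \<forall>v\<in>{0..<6}. ({u, v} \<in> snd (path_graph 6)) = ({x u, x v} \<in> snd (cycle_graph n) \<union> F)"
      unfolding induced_subgraph_of_def fst snd_conv by blast
    have adj: "\<And>u v. u < 6 \<Longrightarrow> v < 6 \<Longrightarrow> ({u, v} \<in> snd (path_graph 6)) = ({x u, x v} \<in> snd (cycle_graph n) \<union> F)"
      using adj0 by simp
    have A: "\<forall>i<5. x i \<in> N \<or> x (Suc i) \<in> N \<or> {x i, x (Suc i)} = D"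
    proof (intro allI impI)
      fix i :: nat assume "i < 5"
      then have "{x i, x (Suc i)} \<in> snd (cycle_graph n) \<union> F" using adj[of i "Suc i"] path_edge by simp
      then show "x i \<in> N \<or> x (Suc i) \<in> N \<or> {x i, x (Suc i)} = D" using cov by blast
    qed
    have B: "\<forall>i<6. \<forall>j<6. x i \<in> N \<and> x j \<in> N \<and> i \<noteq> j \<longrightarrow> j = Suc i \<or> i = Suc j"
    proof (intro allI impI)
      fix i j :: nat assume h: "i < 6" "j < 6" "x i \<in> N \<and> x j \<in> N \<and> i \<noteq> j"
      then have "x i \<noteq> x j" using inj unfolding inj_on_def by auto
      then have "{x i, x j} \<in> F" using h unfolding F_def by blast
      then have "{i, j} \<in> snd (path_graph 6)" using adj[of i j] h by simp
      then show "j = Suc i \<or> i = Suc j" unfolding path_edge by auto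
    qed
    have C: "\<forall>i<5. \<forall>j<5. {x i, x (Suc i)} = D \<and> {x j, x (Suc j)} = D \<longrightarrow> i = j"
    proof (intro allI impI)
      fix i j :: nat assume h: "i < 5" "j < 5" "{x i, x (Suc i)} = D \<and> {x j, x (Suc j)} = D"
      then have "{x i, x (Suc i)} = {x j, x (Suc j)}" by simp
      then have d: "(x i = x j \<and> x (Suc i) = x (Suc j)) \<or> (x i = x (Suc j) \<and> x (Suc i) = x j)"
        by (auto simp: doubleton_eq_iff)
      have inj6: "\<And>a b. a < 6 \<Longrightarrow> b < 6 \<Longrightarrow> x a = x b \<Longrightarrow> a = b" using inj unfolding inj_on_def by auto
      show "i = j" using d
      proof (elim disjE conjE)
        assume "x i = x j" then show "i = j" using inj6[of i j] h(1,2) by simp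
      next
        assume e: "x i = x (Suc j)" "x (Suc i) = x j"
        have "i = Suc j" using inj6[of i "Suc j"] e(1) h(1,2) by simp
        moreover have "Suc i = j" using inj6[of "Suc i" j] e(2) h(1,2) by simp
        ultimately show "i = j" by simp
      qed
    qed
    show False using comb[OF A B C] .
  qed
  have FN: "F \<subseteq> {e. \<exists>u v. u \<in> N \<and> v \<in> N \<and> u \<noteq> v \<and> e = {u, v}}" unfolding F_def by simp
  show ?thesis unfolding probe_H_free_def using ind FN free by blast
qed

theorem mainTheorem9:
  fixes l :: nat
  assumes "l \<ge> 3"
  shows "\<not> probe_H_free (path_graph 5) (cycle_graph (2 * l + 1)) \<and>
         probe_H_free (path_graph 6) (cycle_graph (2 * l + 1))"
proof
  show "\<not> probe_H_free (path_graph 5) (cycle_graph (2 * l + 1))"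
    unfolding probe_H_free_def H_free_def using part1[OF refl assms] by blast
  show "probe_H_free (path_graph 6) (cycle_graph (2 * l + 1))" using part2[OF refl assms] .
qed

end
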